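(* Let $\mathcal F\subseteq 2^{[n]}$ be a simply rooted family of sets such that $\emptyset\in\mathcal F$, and let $A\in\mathcal F$ be non-empty. For $k\ge 0$ let $\mathcal C_k(\mathcal F,A)=\{[C,A]: C\subseteq A,\ [C,A]\subseteq\mathcal F,\ |A\setminus C|=k\}$. Then $$\sum_{k=0}^{|A|}(-1)^k|\mathcal C_k(\mathcal F,A)|=0.$$
   Context: $[n]=\{1,\dots,n\}$, $2^{[n]}$ its power set, $[C,D]=\{E\in 2^{[n]}: C\subseteq E\subseteq D\}$, $[i,A]=[\{i\},A]$. A family $\mathcal F\subseteq 2^{[n]}$ is simply rooted if for every non-empty $A\in\mathcal F$ there is $i\in A$ with $[i,A]\subseteq\mathcal F$. *)

theory Defs
  imports Main
begin

definition interval :: "nat set \<Rightarrow> nat set \<Rightarrow> nat set set" where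
  "interval C D = {E. C \<subseteq> E \<and> E \<subseteq> D}"

definition simply_rooted :: "nat set set \<Rightarrow> bool" where
  "simply_rooted F \<longleftrightarrow>
     (\<forall>A\<in>F. A \<noteq> {} \<longrightarrow> (\<exists>i\<in>A. interval {i} A \<subseteq> F))"

definition Cfam :: "nat \<Rightarrow> nat set set \<Rightarrow> nat set \<Rightarrow> nat set set set" where
  "Cfam k F A = {interval C A | C. C \<subseteq> A \<and> interval C A \<subseteq> F \<and> card (A - C) = k}"

end

theory Submission
  imports Defs
begin

lemma pow_alt:
  assumes "finite B"
  shows "(\<Sum>C\<in>Pow B. (-1::int) ^ card C) = (if B = {} then 1 else 0)"
  using assms
proof (induction B rule: finite_induct)
  case empty
  then show ?case by simp
next
  case (insert x B)
  have inj: "inj_on (insert x) (Pow B)"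
    using insert(2) by (auto simp: inj_on_def)
  have disj: "Pow B \<inter> insert x ` Pow B = {}" using insert(2) by auto
  have "(\<Sum>C\<in>Pow (insert x B). (-1::int) ^ card C)
      = (\<Sum>C\<in>Pow B. (-1::int) ^ card C) + (\<Sum>C\<in>insert x ` Pow B. (-1::int) ^ card C)"
    unfolding Pow_insert using insert(1) disj by (simp add: sum.union_disjoint)
  also have "(\<Sum>C\<in>insert x ` Pow B. (-1::int) ^ card C) = (\<Sum>C\<in>Pow B. (-1::int) ^ card (insert x C))"
    using inj by (simp add: sum.reindex)
  also have "\<dots> = (\<Sum>C\<in>Pow B. - ((-1::int) ^ card C))"
  proof (rule sum.cong)
    fix C assume "C \<in> Pow B"
    then have "finite C" "x \<notin> C" using insert(1,2) finite_subset by auto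
    then show "(-1::int) ^ card (insert x C) = - ((-1::int) ^ card C)" by simp
  qed simp
  finally show ?case by (simp add: sum_negf)
qed

lemma key:
  assumes "finite A" "A \<noteq> {}" "simply_rooted F" "{} \<in> F"
  shows "(\<Sum>C\<in>{C. C \<subseteq> A \<and> interval C A \<subseteq> F}. (-1::int) ^ card C) = 0"
  using assms(1,2)
proof (induction A rule: finite_psubset_induct)
  case (psubset A)
  show ?case
  proof (cases "A \<in> F")
    case False
    then have "{C. C \<subseteq> A \<and> interval C A \<subseteq> F} = {}" by (auto simp: interval_def)
    then show ?thesis by (metis sum.empty)
  next
    case True
    then obtain i where i: "i \<in> A" "interval {i} A \<subseteq> F"
      using assms(3) psubset(3) unfolding simply_rooted_def by blast
    define S where "S = {C. C \<subseteq> A \<and> interval C A \<subseteq> F}"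
    define B where "B = A - {i}"
    have fB: "finite B" using psubset(1) B_def by simp
    have S1: "{C\<in>S. i \<in> C} = insert i ` Pow B"
    proof
      show "{C\<in>S. i \<in> C} \<subseteq> insert i ` Pow B"
      proof
        fix C assume "C \<in> {C\<in>S. i \<in> C}"
        then have "C = insert i (C - {i})" "C - {i} \<in> Pow B" unfolding S_def B_def by auto
        then show "C \<in> insert i ` Pow B" by blast
      qed
    next
      show "insert i ` Pow B \<subseteq> {C\<in>S. i \<in> C}"
        using i unfolding S_def B_def interval_def by auto
    qed
    have S2: "{C\<in>S. i \<notin> C} = {C. C \<subseteq> B \<and> interval C B \<subseteq> F}"
    proof
      show "{C\<in>S. i \<notin> C} \<subseteq> {C. C \<subseteq> B \<and> interval C B \<subseteq> F}"
        unfolding S_def B_def interval_def by auto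
    next
      show "{C. C \<subseteq> B \<and> interval C B \<subseteq> F} \<subseteq> {C\<in>S. i \<notin> C}"
      proof
        fix C assume C: "C \<in> {C. C \<subseteq> B \<and> interval C B \<subseteq> F}"
        have "interval C A \<subseteq> F"
        proof
          fix E assume E: "E \<in> interval C A"
          show "E \<in> F"
          proof (cases "i \<in> E")
            case True
            then show ?thesis using E i unfolding interval_def by auto
          next
            case False
            then have "E \<in> interval C B" using E unfolding interval_def B_def by auto
            then show ?thesis using C by auto
          qed
        qed
        then show "C \<in> {C\<in>S. i \<notin> C}" using C unfolding S_def B_def by auto
      qed
    qed
    have fS: "finite S" unfolding S_def using psubset(1) by (simp add: finite_subset[of _ "Pow A"] subset_iff)
    have split: "(\<Sum>C\<in>S. (-1::int) ^ card C)
        = (\<Sum>C\<in>{C\<in>S. i \<in> C}. (-1::int) ^ card C) + (\<Sum>C\<in>{C\<in>S. i \<notin> C}. (-1::int) ^ card C)"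
      using sum.Int_Diff[OF fS, of _ "{C. i \<in> C}"] by (simp add: Int_def set_diff_eq)
    have inj: "inj_on (insert i) (Pow B)"
      unfolding inj_on_def B_def by (metis Diff_insert_absorb PowD insert_subset subset_Diff_insert) 
    have p1: "(\<Sum>C\<in>{C\<in>S. i \<in> C}. (-1::int) ^ card C) = - (\<Sum>C\<in>Pow B. (-1::int) ^ card C)"
    proof -
      have "(\<Sum>C\<in>{C\<in>S. i \<in> C}. (-1::int) ^ card C) = (\<Sum>C\<in>Pow B. (-1::int) ^ card (insert i C))"
        unfolding S1 using inj by (simp add: sum.reindex)
      also have "\<dots> = (\<Sum>C\<in>Pow B. - ((-1::int) ^ card C))"
      proof (rule sum.cong)
        fix C assume "C \<in> Pow B"
        then have "finite C" "i \<notin> C" using fB finite_subset B_def by auto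
        then show "(-1::int) ^ card (insert i C) = - ((-1::int) ^ card C)" by simp
      qed simp
      finally show ?thesis by (simp add: sum_negf)
    qed
    show ?thesis
    proof (cases "B = {}")
      case True
      have "{C. C \<subseteq> B \<and> interval C B \<subseteq> F} = {{}}"
        using True assms(4) by (auto simp: interval_def)
      then show ?thesis using split p1 S2 pow_alt[OF fB] True unfolding S_def by simp
    next
      case False
      have "B \<subset> A" using i B_def by auto
      then have "(\<Sum>C\<in>{C. C \<subseteq> B \<and> interval C B \<subseteq> F}. (-1::int) ^ card C) = 0"
        using psubset.IH False by blast
      then show ?thesis using split p1 S2 pow_alt[OF fB] False unfolding S_def by simp
    qed
  qed
qed

theorem lemma1:
  fixes n :: nat and F :: "nat set set" and A :: "nat set"
  assumes "F \<subseteq> Pow {1..n}"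
    and "simply_rooted F"
    and "{} \<in> F"
    and "A \<in> F" and "A \<noteq> {}"
  shows "(\<Sum>k = 0..card A. (-1::int) ^ k * int (card (Cfam k F A))) = 0"
proof -
  define S where "S = {C. C \<subseteq> A \<and> interval C A \<subseteq> F}"
  have fA: "finite A" using assms(1,4) finite_subset[of A "{1..n}"] by auto
  have fS: "finite S" unfolding S_def using fA by (simp add: finite_subset[of _ "Pow A"] subset_iff)
  have injI: "inj_on (\<lambda>C. interval C A) S"
  proof (rule inj_onI)
    fix C D assume "C \<in> S" "D \<in> S" "interval C A = interval D A"
    then have "C \<in> interval D A" "D \<in> interval C A" unfolding S_def interval_def by auto
    then show "C = D" unfolding interval_def by auto
  qed
  have cardk: "card (Cfam k F A) = card {C\<in>S. card (A - C) = k}" for k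
  proof -
    have "Cfam k F A = (\<lambda>C. interval C A) ` {C\<in>S. card (A - C) = k}"
      unfolding Cfam_def S_def by auto
    moreover have "inj_on (\<lambda>C. interval C A) {C\<in>S. card (A - C) = k}"
      using injI by (rule inj_on_subset) auto
    ultimately show ?thesis by (simp add: card_image)
  qed
  have "(\<Sum>k = 0..card A. (-1::int) ^ k * int (card (Cfam k F A)))
      = (\<Sum>k = 0..card A. (\<Sum>C\<in>{C\<in>S. card (A - C) = k}. (-1::int) ^ card (A - C)))"
    by (rule sum.cong) (auto simp: cardk)
  also have "\<dots> = (\<Sum>C\<in>S. (-1::int) ^ card (A - C))"
    by (rule sum.group) (use fS fA in \<open>auto simp: card_mono\<close>)
  also have "\<dots> = (\<Sum>C\<in>S. (-1::int) ^ card A * (-1) ^ card C)"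
  proof (rule sum.cong)
    fix C assume "C \<in> S"
    then have CA: "C \<subseteq> A" unfolding S_def by auto
    then have e: "card (A - C) + card C = card A" using fA
      by (metis card_Diff_subset card_mono finite_subset le_add_diff_inverse2)
    have "(-1::int) ^ card A * (-1) ^ card C = (-1) ^ card (A - C) * ((-1) ^ card C * (-1) ^ card C)"
      by (simp flip: e add: power_add)
    also have "(-1::int) ^ card C * (-1) ^ card C = 1"
      by (simp flip: power_add add: power_mult_distrib)
    finally show "(-1::int) ^ card (A - C) = (-1) ^ card A * (-1) ^ card C" by simp
  qed simp
  also have "\<dots> = (-1) ^ card A * (\<Sum>C\<in>S. (-1::int) ^ card C)"
    by (simp add: sum_distrib_left)
  also have "(\<Sum>C\<in>S. (-1::int) ^ card C) = 0"
    unfolding S_def using key[OF fA assms(5,2,3)] .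
  finally show ?thesis by simp
qed

end
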